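(* Let $\rho>0$, $z=\{z_0,\dots,z_n\}$ with pairwise distinct coordinates, $\alpha=\min_{i\ne j}|z_i-z_j|$, $k\in\{1,\dots,n\}$ and $\pi\in\mathcal{P}^k_z$. Fix $N\in\mathbb{N}\setminus\{0\}$. For every path $p\in G(k+2N,\pi_0\to\pi)$ there exists a path $\hat p\in G(k,\pi_0\to\pi)$ such that $$\frac{P_0(p)}{P_0(\hat p)}\le\left(\frac{(1+\frac{\gamma_1}{\rho\alpha})^k}{\alpha\rho}\right)^N.$$
   Context: $\mathcal{P}_z$ is the set of partitions of $z$; $\mathcal{P}^r_z$ is the set of partitions with $n+1-r$ blocks; $\pi_0$ is the partition into singletons. The ARG $\Gamma^{\rho,z}$ is the Markov chain on $\mathcal{P}_z$ in which each pair of blocks merges at rate $1$ and each block $\{z_{i_1}<\dots<z_{i_k}\}$ splits into $\{z_{i_1},\dots,z_{i_j}\}$ and $\{z_{i_{j+1}},\dots,z_{i_k}\}$ at rate $\rho(z_{i_{j+1}}-z_{i_j})$. Let $\theta(\pi',\pi'')$ be the transition rate from $\pi'$ to $\pi''$ of this chain with $\rho=1$. For $j\ge1$, $G(j,\pi'\to\pi'')$ is the set of sequences $(\pi^{(0)}=\pi',\pi^{(1)},\dots,\pi^{(j)}=\pi'')$ with $\pi^{(1)},\dots,\pi^{(j-1)}\in\mathcal{P}_z\setminus\{\pi',\pi''\}$ and $\theta(\pi^{(i)},\pi^{(i+1)})>0$ for all $0\le i\le j-1$. $P_0$ is the law of the embedded jump chain of $\Gamma^{\rho,z}$ started at $\pi_0$,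 and $P_0(p)$ is the probability that its first steps follow the path $p$. $\gamma_r=\frac{(n-r)(n-r+1)}{2}$ is the total coalescence rate from a partition of order $r$. *)

theory Defs
  imports Complex_Main "HOL-Library.Disjoint_Sets"
begin

text \<open>The sampling points z = {z_0,...,z_n} are modelled as a finite set Z of reals.\<close>

definition partitions :: "real set \<Rightarrow> real set set set" where
  "partitions Z = {P. partition_on Z P}"

definition pi0 :: "real set \<Rightarrow> real set set" where
  "pi0 Z = {{x} | x. x \<in> Z}"

definition partitions_order :: "real set \<Rightarrow> nat \<Rightarrow> real set set set" where
  "partitions_order Z r = {P \<in> partitions Z. card P = card Z - r}"

text \<open>Rate contributed by coalescence events (each pair of blocks merges at rate 1).\<close>
definition merge_rate :: "real set set \<Rightarrow> real set set \<Rightarrow> real" where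
  "merge_rate P P' = real (card {{B1, B2} | B1 B2. B1 \<in> P \<and> B2 \<in> P \<and> B1 \<noteq> B2 \<and>
       P' = insert (B1 \<union> B2) (P - {B1, B2})})"

definition split_rate :: "real \<Rightarrow> real set set \<Rightarrow> real set set \<Rightarrow> real" where
  "split_rate \<rho> P P' = (\<Sum>(B, a) \<in> {(B, a). B \<in> P \<and> a \<in> B \<and> a < Max B \<and>
       P' = insert {x \<in> B. x \<le> a} (insert {x \<in> B. a < x} (P - {B}))}.
       \<rho> * (Min {x \<in> B. a < x} - a))"

definition arg_rate :: "real \<Rightarrow> real set set \<Rightarrow> real set set \<Rightarrow> real" where
  "arg_rate \<rho> P P' = merge_rate P P' + split_rate \<rho> P P'"

definition theta :: "real set set \<Rightarrow> real set set \<Rightarrow> real" where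
  "theta P P' = arg_rate 1 P P'"

definition total_rate :: "real \<Rightarrow> real set \<Rightarrow> real set set \<Rightarrow> real" where
  "total_rate \<rho> Z P = (\<Sum>P' \<in> partitions Z. arg_rate \<rho> P P')"

definition jump_prob :: "real \<Rightarrow> real set \<Rightarrow> real set set \<Rightarrow> real set set \<Rightarrow> real" where
  "jump_prob \<rho> Z P P' = arg_rate \<rho> P P' / total_rate \<rho> Z P"

text \<open>G(j, P1 -> P2): paths as lists (pi^(0),...,pi^(j)).\<close>
definition paths :: "real set \<Rightarrow> nat \<Rightarrow> real set set \<Rightarrow> real set set \<Rightarrow> real set set list set" where
  "paths Z j P1 P2 = {ps. length ps = j + 1 \<and> ps ! 0 = P1 \<and> ps ! j = P2 \<and>
      (\<forall>i \<in> {1..<j}. ps ! i \<in> partitions Z - {P1, P2}) \<and>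
      (\<forall>i < j. theta (ps ! i) (ps ! (i + 1)) > 0)}"

text \<open>P_0(p): probability that the embedded jump chain started at pi_0 follows p.\<close>
definition path_prob :: "real \<Rightarrow> real set \<Rightarrow> real set set list \<Rightarrow> real" where
  "path_prob \<rho> Z ps = (if ps \<noteq> [] \<and> hd ps = pi0 Z
      then (\<Prod>i < length ps - 1. jump_prob \<rho> Z (ps ! i) (ps ! (i + 1))) else 0)"

definition min_dist :: "real set \<Rightarrow> real" where
  "min_dist Z = Min {\<bar>x - y\<bar> | x y. x \<in> Z \<and> y \<in> Z \<and> x \<noteq> y}"

definition gamma :: "real set \<Rightarrow> nat \<Rightarrow> real" where
  "gamma Z r = (let n = card Z - 1 in real ((n - r) * (n - r + 1)) / 2)"

end

theory Submission
  imports Defs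
begin

definition GI :: "real set set \<Rightarrow> (real set \<times> real) set" where
  "GI Q = {(B, a). B \<in> Q \<and> a \<in> B \<and> a < Max B}"

definition dd :: "real set \<times> real \<Rightarrow> real" where
  "dd x = Min {y \<in> fst x. snd x < y} - snd x"

definition SS :: "real set set \<Rightarrow> real" where
  "SS Q = sum dd (GI Q)"

definition sig :: "real set set \<Rightarrow> nat \<Rightarrow> real" where
  "sig Q j = Min (sum dd ` {J. J \<subseteq> GI Q \<and> card J = j})"

definition Phi :: "real set set \<Rightarrow> real" where
  "Phi Q = prod (sig Q) {1..<card (GI Q)}"

definition spl :: "real set set \<Rightarrow> real set \<Rightarrow> real \<Rightarrow> real set set" where
  "spl Q B a = insert {x \<in> B. x \<le> a} (insert {x \<in> B. a < x} (Q - {B}))"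

definition mrg :: "real set set \<Rightarrow> real set \<Rightarrow> real set \<Rightarrow> real set set" where
  "mrg Q B1 B2 = insert (B1 \<union> B2) (Q - {B1, B2})"

locale fz =
  fixes Z :: "real set"
  assumes finZ: "finite Z"
begin

lemma part_finite: "partition_on Z Q \<Longrightarrow> finite Q"
  using finZ finite_elements by blast

lemma block_props:
  assumes "partition_on Z Q" "B \<in> Q"
  shows "finite B" "B \<noteq> {}" "B \<subseteq> Z"
  using assms finZ unfolding partition_on_def
  by (auto intro: finite_subset)

lemma block_disj:
  assumes "partition_on Z Q" "B1 \<in> Q" "B2 \<in> Q" "B1 \<noteq> B2"
  shows "B1 \<inter> B2 = {}"
  using assms unfolding partition_on_def disjoint_def by blast

lemma block_eq:
  assumes "partition_on Z Q" "B1 \<in> Q" "B2 \<in> Q" "x \<in> B1" "x \<in> B2"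
  shows "B1 = B2"
  using block_disj[OF assms(1-3)] assms(4,5) by blast

lemma mrg_part:
  assumes P: "partition_on Z Q" and "B1 \<in> Q" "B2 \<in> Q" "B1 \<noteq> B2"
  shows "partition_on Z (mrg Q B1 B2)" "card (mrg Q B1 B2) + 1 = card Q"
    "Q - mrg Q B1 B2 = {B1, B2}"
proof -
  have d: "B1 \<inter> B2 = {}" using block_disj assms by blast
  have ne1: "B1 \<noteq> {}" and ne2: "B2 \<noteq> {}" using block_props assms by auto
  have nin: "B1 \<union> B2 \<notin> Q"
  proof
    assume "B1 \<union> B2 \<in> Q"
    then have "B1 \<union> B2 = B1" using block_eq[OF P _ \<open>B1 \<in> Q\<close>] ne1 by blast
    then show False using d ne2 by blast
  qed
  show "partition_on Z (mrg Q B1 B2)"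
    unfolding mrg_def
  proof (rule partition_onI)
    show "\<Union> (insert (B1 \<union> B2) (Q - {B1, B2})) = Z"
      using P assms(2,3) unfolding partition_on_def by blast
    show "{} \<notin> insert (B1 \<union> B2) (Q - {B1, B2})" using P ne1 unfolding partition_on_def by blast
    fix p q assume "p \<in> insert (B1 \<union> B2) (Q - {B1, B2})" "q \<in> insert (B1 \<union> B2) (Q - {B1, B2})" "p \<noteq> q"
    have h: "C \<inter> (B1 \<union> B2) = {}" if "C \<in> Q - {B1, B2}" for C
      using block_disj[OF P, of C B1] block_disj[OF P, of C B2] that assms(2,3) by blast
    from \<open>p \<in> _\<close> \<open>q \<in> _\<close> \<open>p \<noteq> q\<close> show "disjnt p q"
      unfolding disjnt_def
    proof (elim insertE)
      assume "p = B1 \<union> B2" "q = B1 \<union> B2" then show "p \<inter> q = {}" using \<open>p \<noteq> q\<close> by simp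
    next
      assume "p = B1 \<union> B2" "q \<in> Q - {B1, B2}" then show "p \<inter> q = {}" using h by blast
    next
      assume "p \<in> Q - {B1, B2}" "q = B1 \<union> B2" then show "p \<inter> q = {}" using h by blast
    next
      assume "p \<in> Q - {B1, B2}" "q \<in> Q - {B1, B2}" then show "p \<inter> q = {}"
        using block_disj[OF P] \<open>p \<noteq> q\<close> by blast
    qed
  qed
  have fQ: "finite Q" using part_finite P by blast
  show "card (mrg Q B1 B2) + 1 = card Q"
  proof -
    have c2: "card {B1, B2} = 2" using assms(4) by simp
    have "card (Q - {B1, B2}) = card Q - 2"
      using card_Diff_subset[of "{B1,B2}" Q] c2 assms(2,3) by simp
    moreover have "card Q \<ge> 2" using card_mono[OF fQ, of "{B1,B2}"] c2 assms(2,3) by simp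
    moreover have "card (mrg Q B1 B2) = card (Q - {B1, B2}) + 1"
      unfolding mrg_def using nin fQ by simp
    ultimately show ?thesis by simp
  qed
  show "Q - mrg Q B1 B2 = {B1, B2}"
    unfolding mrg_def using nin assms(2-4) d ne1 ne2 by auto
qed

lemma GI_iff: "(B, a) \<in> GI Q \<longleftrightarrow> B \<in> Q \<and> a \<in> B \<and> a < Max B"
  unfolding GI_def by simp

lemma spl_facts:
  assumes P: "partition_on Z Q" and G: "(B, a) \<in> GI Q"
  shows "{x \<in> B. x \<le> a} \<noteq> {}" "{x \<in> B. a < x} \<noteq> {}"
    "{x \<in> B. x \<le> a} \<noteq> {x \<in> B. a < x}"
    "{x \<in> B. x \<le> a} \<notin> Q" "{x \<in> B. a < x} \<notin> Q"
    "B \<in> Q" "a \<in> B" "a < Max B" "finite B"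
proof -
  show B: "B \<in> Q" "a \<in> B" "a < Max B" using G by (auto simp: GI_iff)
  show fB: "finite B" using block_props[OF P B(1)] by simp
  have mB: "Max B \<in> B" using fB B(2) by (intro Max_in) auto
  show ne1: "{x \<in> B. x \<le> a} \<noteq> {}" using B by auto
  show ne2: "{x \<in> B. a < x} \<noteq> {}" using B mB by auto
  show "{x \<in> B. x \<le> a} \<noteq> {x \<in> B. a < x}" using B by auto
  show "{x \<in> B. x \<le> a} \<notin> Q"
  proof
    assume "{x \<in> B. x \<le> a} \<in> Q"
    moreover have "a \<in> {x \<in> B. x \<le> a}" using B by simp
    ultimately have "{x \<in> B. x \<le> a} = B" using block_eq[OF P _ B(1)] B(2) by blast
    then have "Max B \<in> {x \<in> B. x \<le> a}" using mB by simp
    then show False using B(3) by simp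
  qed
  show "{x \<in> B. a < x} \<notin> Q"
  proof
    assume "{x \<in> B. a < x} \<in> Q"
    moreover have "Max B \<in> {x \<in> B. a < x}" using B mB by simp
    ultimately have "{x \<in> B. a < x} = B" using block_eq[OF P _ B(1)] mB by blast
    then have "a \<in> {x \<in> B. a < x}" using B by simp
    then show False by simp
  qed
qed

lemma spl_part:
  assumes P: "partition_on Z Q" and G: "(B, a) \<in> GI Q"
  shows "partition_on Z (spl Q B a)" "card (spl Q B a) = card Q + 1"
    "mrg (spl Q B a) {x \<in> B. x \<le> a} {x \<in> B. a < x} = Q"
    "{x \<in> B. x \<le> a} \<in> spl Q B a" "{x \<in> B. a < x} \<in> spl Q B a"
proof -
  note F = spl_facts[OF P G]
  have fQ: "finite Q" using part_finite P by blast
  show "partition_on Z (spl Q B a)"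
    unfolding spl_def
  proof (rule partition_onI)
    show "\<Union> (insert {x \<in> B. x \<le> a} (insert {x \<in> B. a < x} (Q - {B}))) = Z"
      using P F(6) unfolding partition_on_def by auto
    show "{} \<notin> insert {x \<in> B. x \<le> a} (insert {x \<in> B. a < x} (Q - {B}))"
      using P F(1,2) unfolding partition_on_def by auto
    have h: "C \<inter> B = {}" if "C \<in> Q - {B}" for C
      using block_disj[OF P, of C B] that F(6) by blast
    fix p q assume pq: "p \<in> insert {x \<in> B. x \<le> a} (insert {x \<in> B. a < x} (Q - {B}))"
      "q \<in> insert {x \<in> B. x \<le> a} (insert {x \<in> B. a < x} (Q - {B}))" "p \<noteq> q"
    have h2: "C \<inter> {x \<in> B. x \<le> a} = {}" "C \<inter> {x \<in> B. a < x} = {}" if "C \<in> Q - {B}" for C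
      using h[OF that] by blast+
    from pq show "disjnt p q" unfolding disjnt_def
    proof (elim insertE)
    qed (use h2 block_disj[OF P] \<open>p \<noteq> q\<close> in \<open>auto\<close>)
  qed
  show "card (spl Q B a) = card Q + 1"
  proof -
    have "card Q > 0" using fQ F(6) card_gt_0_iff by blast
    then have "card (Q - {B}) + 1 = card Q" using card_Diff_singleton[OF F(6)] by simp
    moreover have "card (spl Q B a) = card (Q - {B}) + 2"
      unfolding spl_def using F fQ by simp
    ultimately show ?thesis by simp
  qed
  show "mrg (spl Q B a) {x \<in> B. x \<le> a} {x \<in> B. a < x} = Q"
    unfolding mrg_def spl_def
  proof -
    have "{x \<in> B. x \<le> a} \<union> {x \<in> B. a < x} = B" by auto
    moreover have "insert {x \<in> B. x \<le> a} (insert {x \<in> B. a < x} (Q - {B})) -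
        {{x \<in> B. x \<le> a}, {x \<in> B. a < x}} = Q - {B}" using F(4,5) by auto
    ultimately show "insert ({x \<in> B. x \<le> a} \<union> {x \<in> B. a < x})
     (insert {x \<in> B. x \<le> a} (insert {x \<in> B. a < x} (Q - {B})) -
      {{x \<in> B. x \<le> a}, {x \<in> B. a < x}}) = Q" using F(6) by auto
  qed
  show "{x \<in> B. x \<le> a} \<in> spl Q B a" "{x \<in> B. a < x} \<in> spl Q B a" unfolding spl_def by auto
qed

lemma GI_Sigma:
  assumes P: "partition_on Z Q"
  shows "GI Q = Sigma Q (\<lambda>B. B - {Max B})"
proof -
  have "a \<le> Max B" if "B \<in> Q" "a \<in> B" for B a using block_props[OF P that(1)] that(2) by simp
  then show ?thesis unfolding GI_def by force
qed

lemma GI_finite: assumes P: "partition_on Z Q" shows "finite (GI Q)"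
proof -
  have "finite (Sigma Q (\<lambda>B. B - {Max B}))"
    using part_finite[OF P] block_props(1)[OF P] by (intro finite_SigmaI) auto
  then show ?thesis using GI_Sigma[OF P] by simp
qed

lemma card_GI:
  assumes P: "partition_on Z Q"
  shows "card (GI Q) + card Q = card Z"
proof -
  have fQ: "finite Q" using part_finite P by blast
  have "card (GI Q) = (\<Sum>B\<in>Q. card (B - {Max B}))"
    unfolding GI_Sigma[OF P] using fQ block_props[OF P] by (simp add: card_SigmaI)
  also have "\<dots> = (\<Sum>B\<in>Q. card B - 1)"
    using block_props[OF P] by (intro sum.cong) (auto simp: card_Diff_singleton)
  finally have 1: "card (GI Q) = (\<Sum>B\<in>Q. card B - 1)" .
  have "card Z = (\<Sum>B\<in>Q. card B)"
    using sum.partition[OF finZ P, of "\<lambda>_. (1::nat)"] by simp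
  also have "\<dots> = (\<Sum>B\<in>Q. (card B - 1) + 1)"
    using block_props[OF P] by (intro sum.cong) (auto simp: Suc_leI card_gt_0_iff)
  also have "\<dots> = (\<Sum>B\<in>Q. card B - 1) + card Q" by (subst sum.distrib) simp
  finally show ?thesis using 1 by simp
qed

lemma min_dist_le:
  assumes "x \<in> Z" "y \<in> Z" "x \<noteq> y"
  shows "min_dist Z \<le> \<bar>x - y\<bar>"
proof -
  have "{\<bar>x - y\<bar> | x y. x \<in> Z \<and> y \<in> Z \<and> x \<noteq> y} \<subseteq> (\<lambda>(x,y). \<bar>x - y\<bar>) ` (Z \<times> Z)" by auto
  then have "finite {\<bar>x - y\<bar> | x y. x \<in> Z \<and> y \<in> Z \<and> x \<noteq> y}"
    using finZ finite_subset by blast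
  then show ?thesis unfolding min_dist_def using assms by (intro Min_le) auto
qed

lemma min_dist_pos:
  assumes "x \<in> Z" "y \<in> Z" "x \<noteq> y"
  shows "min_dist Z > 0"
proof -
  have "{\<bar>x - y\<bar> | x y. x \<in> Z \<and> y \<in> Z \<and> x \<noteq> y} \<subseteq> (\<lambda>(x,y). \<bar>x - y\<bar>) ` (Z \<times> Z)" by auto
  then have f: "finite {\<bar>x - y\<bar> | x y. x \<in> Z \<and> y \<in> Z \<and> x \<noteq> y}"
    using finZ finite_subset by blast
  have ne: "{\<bar>x - y\<bar> | x y. x \<in> Z \<and> y \<in> Z \<and> x \<noteq> y} \<noteq> {}" using assms by auto
  have "Min {\<bar>x - y\<bar> | x y. x \<in> Z \<and> y \<in> Z \<and> x \<noteq> y} \<in> {\<bar>x - y\<bar> | x y. x \<in> Z \<and> y \<in> Z \<and> x \<noteq> y}"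
    by (rule Min_in[OF f ne])
  then obtain u v where "u \<in> Z" "v \<in> Z" "u \<noteq> v" "Min {\<bar>x - y\<bar> | x y. x \<in> Z \<and> y \<in> Z \<and> x \<noteq> y} = \<bar>u - v\<bar>"
    by blast
  then show ?thesis unfolding min_dist_def by simp
qed

lemma dd_facts:
  assumes P: "partition_on Z Q" and G: "(B, a) \<in> GI Q"
  shows "Min {y \<in> B. a < y} \<in> B" "a < Min {y \<in> B. a < y}" "dd (B, a) = Min {y \<in> B. a < y} - a"
    "dd (B, a) > 0" "dd (B, a) \<ge> min_dist Z"
proof -
  have B: "B \<in> Q" "a \<in> B" "a < Max B" using G by (auto simp: GI_iff)
  have fB: "finite B" using block_props[OF P B(1)] by simp
  have mB: "Max B \<in> B" using fB B(2) by (intro Max_in) auto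
  have f: "finite {y \<in> B. a < y}" using fB by simp
  have ne: "{y \<in> B. a < y} \<noteq> {}" using mB B by auto
  show m: "Min {y \<in> B. a < y} \<in> B" "a < Min {y \<in> B. a < y}" using Min_in[OF f ne] by auto
  show "dd (B, a) = Min {y \<in> B. a < y} - a" unfolding dd_def by simp
  then show "dd (B, a) > 0" using m by simp
  have "B \<subseteq> Z" using block_props[OF P B(1)] by simp
  then have "min_dist Z \<le> \<bar>Min {y \<in> B. a < y} - a\<bar>" using m B(2) by (intro min_dist_le) auto
  then show "dd (B, a) \<ge> min_dist Z" using m unfolding dd_def by simp
qed

lemma dd_pos: "partition_on Z Q \<Longrightarrow> x \<in> GI Q \<Longrightarrow> dd x > 0"
  using dd_facts(4) by (cases x) auto

lemma dd_ge: "partition_on Z Q \<Longrightarrow> x \<in> GI Q \<Longrightarrow> dd x \<ge> min_dist Z"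
  using dd_facts(5) by (cases x) auto

lemma pi0_part: "partition_on Z (pi0 Z)" "card (pi0 Z) = card Z" "GI (pi0 Z) = {}"
proof -
  have e: "pi0 Z = (\<lambda>x. {x}) ` Z" unfolding pi0_def by auto
  show "partition_on Z (pi0 Z)" unfolding e by (rule partition_on_singletons)
  show "card (pi0 Z) = card Z" unfolding e by (simp add: card_image)
  show "GI (pi0 Z) = {}" unfolding GI_def pi0_def by auto
qed

lemma GI_empty_pi0:
  assumes P: "partition_on Z Q" and E: "GI Q = {}"
  shows "Q = pi0 Z"
proof -
  have sing: "\<exists>x. B = {x}" if "B \<in> Q" for B
  proof -
    have fB: "finite B" "B \<noteq> {}" using block_props[OF P that] by auto
    have "Max B \<le> Min B"
    proof (rule ccontr)
      assume "\<not> Max B \<le> Min B"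
      moreover have "Min B \<in> B" using fB by (rule Min_in)
      ultimately have "(B, Min B) \<in> GI Q" using that unfolding GI_def by auto
      then show False using E by simp
    qed
    have "\<forall>y\<in>B. y = Min B"
    proof
      fix y assume "y \<in> B"
      then have "y \<le> Max B" "Min B \<le> y" using fB by auto
      then show "y = Min B" using \<open>Max B \<le> Min B\<close> by linarith
    qed
    then have "B = {Min B}" using fB(2) by auto
    then show ?thesis by blast
  qed
  show ?thesis
  proof
    show "Q \<subseteq> pi0 Z"
    proof
      fix B assume "B \<in> Q"
      then obtain x where "B = {x}" using sing by blast
      moreover have "x \<in> Z" using block_props(3)[OF P \<open>B \<in> Q\<close>] \<open>B = {x}\<close> by simp
      ultimately show "B \<in> pi0 Z" unfolding pi0_def by blast
    qed
    show "pi0 Z \<subseteq> Q"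
    proof
      fix C assume "C \<in> pi0 Z"
      then obtain x where x: "x \<in> Z" "C = {x}" unfolding pi0_def by auto
      then obtain B where "B \<in> Q" "x \<in> B" using P unfolding partition_on_def by auto
      moreover obtain y where "B = {y}" using sing \<open>B \<in> Q\<close> by blast
      ultimately show "C \<in> Q" using x by simp
    qed
  qed
qed

lemma union_notin:
  assumes P: "partition_on Z Q" and "B1 \<in> Q" "B2 \<in> Q" "B1 \<noteq> B2"
  shows "B1 \<union> B2 \<notin> Q"
proof
  have d: "B1 \<inter> B2 = {}" using block_disj assms by blast
  have ne1: "B1 \<noteq> {}" and ne2: "B2 \<noteq> {}" using block_props assms by auto
  assume "B1 \<union> B2 \<in> Q"
  then have "B1 \<union> B2 = B1" using block_eq[OF P _ \<open>B1 \<in> Q\<close>] ne1 by blast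
  then show False using d ne2 by blast
qed

definition psi :: "real set \<Rightarrow> real set \<Rightarrow> real set \<times> real \<Rightarrow> real set \<times> real" where
  "psi B1 B2 x = (if fst x = B1 \<or> fst x = B2 then (B1 \<union> B2, snd x) else x)"

lemma mrg_GI:
  assumes P: "partition_on Z Q" and B: "B1 \<in> Q" "B2 \<in> Q" "B1 \<noteq> B2"
  shows "psi B1 B2 ` GI Q \<subseteq> GI (mrg Q B1 B2)" "inj_on (psi B1 B2) (GI Q)"
    "\<And>x. x \<in> GI Q \<Longrightarrow> dd (psi B1 B2 x) \<le> dd x"
proof -
  have d: "B1 \<inter> B2 = {}" using block_disj assms by blast
  have nin: "B1 \<union> B2 \<notin> Q" using union_notin assms by blast
  have fU: "finite (B1 \<union> B2)" using block_props(1)[OF P] B by auto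
  show "psi B1 B2 ` GI Q \<subseteq> GI (mrg Q B1 B2)"
  proof
    fix y assume "y \<in> psi B1 B2 ` GI Q"
    then obtain C c where Cc: "(C, c) \<in> GI Q" "y = psi B1 B2 (C, c)" by auto
    have C: "C \<in> Q" "c \<in> C" "c < Max C" using Cc(1) by (auto simp: GI_iff)
    show "y \<in> GI (mrg Q B1 B2)"
    proof (cases "C = B1 \<or> C = B2")
      case True
      then have "Max C \<le> Max (B1 \<union> B2)" using fU C(2) by (intro Max_mono) auto
      then show ?thesis using True C Cc(2) by (auto simp: psi_def GI_iff mrg_def)
    next
      case False
      then show ?thesis using C Cc(2) by (auto simp: psi_def GI_iff mrg_def)
    qed
  qed
  show "inj_on (psi B1 B2) (GI Q)"
  proof (rule inj_onI)
    fix x y assume x: "x \<in> GI Q" and y: "y \<in> GI Q" and e: "psi B1 B2 x = psi B1 B2 y"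
    obtain C c where xc: "x = (C, c)" by (cases x)
    obtain C' c' where yc: "y = (C', c')" by (cases y)
    have C: "C \<in> Q" "c \<in> C" using x xc by (auto simp: GI_iff)
    have C': "C' \<in> Q" "c' \<in> C'" using y yc by (auto simp: GI_iff)
    have cc: "c = c'" using e xc yc unfolding psi_def by (auto split: if_splits)
    show "x = y"
    proof (cases "C = B1 \<or> C = B2")
      case True
      show ?thesis
      proof (cases "C' = B1 \<or> C' = B2")
        case True
        then have "C = C'" using \<open>C = B1 \<or> C = B2\<close> d C(2) C'(2) cc by auto
        then show ?thesis using xc yc cc by simp
      next
        case False
        then have "B1 \<union> B2 = C'" using e xc yc True unfolding psi_def by auto
        then show ?thesis using nin C'(1) by simp
      qed
    next
      case False
      show ?thesis
      proof (cases "C' = B1 \<or> C' = B2")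
        case True
        then have "B1 \<union> B2 = C" using e xc yc False unfolding psi_def by auto
        then show ?thesis using nin C(1) by simp
      next
        case False
        then show ?thesis using e xc yc \<open>\<not> (C = B1 \<or> C = B2)\<close> unfolding psi_def by auto
      qed
    qed
  qed
  fix x assume x: "x \<in> GI Q"
  obtain C c where xc: "x = (C, c)" by (cases x)
  have C: "C \<in> Q" "c \<in> C" "c < Max C" using x xc by (auto simp: GI_iff)
  show "dd (psi B1 B2 x) \<le> dd x"
  proof (cases "C = B1 \<or> C = B2")
    case True
    have fC: "finite C" using block_props(1)[OF P C(1)] .
    have "Max C \<in> C" using fC C(2) by (intro Max_in) auto
    then have ne: "{y \<in> C. c < y} \<noteq> {}" using C by auto
    have "Min {y \<in> B1 \<union> B2. c < y} \<le> Min {y \<in> C. c < y}"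
      using True fU ne by (intro Min_antimono) auto
    then show ?thesis using True xc unfolding psi_def dd_def by simp
  next
    case False
    then show ?thesis using xc unfolding psi_def by simp
  qed
qed

definition gsp :: "real set \<Rightarrow> real \<Rightarrow> real set \<times> real \<Rightarrow> real set \<times> real" where
  "gsp B a x = (if fst x = B then (if snd x \<le> a then ({y \<in> B. y \<le> a}, snd x) else ({y \<in> B. a < y}, snd x)) else x)"

lemma spl_GI:
  assumes P: "partition_on Z Q" and G: "(B, a) \<in> GI Q"
  shows "gsp B a ` (GI Q - {(B, a)}) \<subseteq> GI (spl Q B a)" "inj_on (gsp B a) (GI Q - {(B, a)})"
    "\<And>x. x \<in> GI Q - {(B, a)} \<Longrightarrow> dd (gsp B a x) = dd x"
    "gsp B a ` (GI Q - {(B, a)}) = GI (spl Q B a)"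
    "card (GI (spl Q B a)) + 1 = card (GI Q)"
proof -
  note F = spl_facts[OF P G]
  have fB: "finite B" using F by simp
  have mB: "Max B \<in> B" using fB F(7) by (intro Max_in) auto
  show sub: "gsp B a ` (GI Q - {(B, a)}) \<subseteq> GI (spl Q B a)"
  proof
    fix y assume "y \<in> gsp B a ` (GI Q - {(B, a)})"
    then obtain C c where Cc: "(C, c) \<in> GI Q - {(B, a)}" "y = gsp B a (C, c)" by auto
    have C: "C \<in> Q" "c \<in> C" "c < Max C" using Cc(1) by (auto simp: GI_iff)
    show "y \<in> GI (spl Q B a)"
    proof (cases "C = B")
      case True
      show ?thesis
      proof (cases "c \<le> a")
        case True
        then have "c < a" using Cc(1) \<open>C = B\<close> by auto
        moreover have "a \<le> Max {y \<in> B. y \<le> a}" using fB F(7) by (intro Max_ge) auto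
        ultimately show ?thesis using True \<open>C = B\<close> C Cc(2) by (auto simp: gsp_def GI_iff spl_def)
      next
        case False
        moreover have "Max B \<le> Max {y \<in> B. a < y}" using fB F(8) mB by (intro Max_ge) auto
        ultimately show ?thesis using \<open>C = B\<close> C Cc(2) by (auto simp: gsp_def GI_iff spl_def)
      qed
    next
      case False
      then show ?thesis using C Cc(2) by (auto simp: gsp_def GI_iff spl_def)
    qed
  qed
  show inj: "inj_on (gsp B a) (GI Q - {(B, a)})"
  proof (rule inj_onI)
    fix x y assume x: "x \<in> GI Q - {(B, a)}" and y: "y \<in> GI Q - {(B, a)}" and e: "gsp B a x = gsp B a y"
    obtain C c where xc: "x = (C, c)" by (cases x)
    obtain C' c' where yc: "y = (C', c')" by (cases y)
    have C: "C \<in> Q" using x xc by (auto simp: GI_iff)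
    have C': "C' \<in> Q" using y yc by (auto simp: GI_iff)
    have cc: "c = c'" using e xc yc unfolding gsp_def by (auto split: if_splits)
    show "x = y"
    proof (cases "C = B")
      case True
      show ?thesis
      proof (cases "C' = B")
        case True
        then show ?thesis using xc yc cc \<open>C = B\<close> by simp
      next
        case False
        then have "C' = {y \<in> B. y \<le> a} \<or> C' = {y \<in> B. a < y}"
          using e xc yc True unfolding gsp_def by (auto split: if_splits)
        then show ?thesis using F(4,5) C' by auto
      qed
    next
      case False
      show ?thesis
      proof (cases "C' = B")
        case True
        then have "C = {y \<in> B. y \<le> a} \<or> C = {y \<in> B. a < y}"
          using e xc yc False unfolding gsp_def by (auto split: if_splits)
        then show ?thesis using F(4,5) C by auto
      next
        case False
        then show ?thesis using e xc yc \<open>C \<noteq> B\<close> unfolding gsp_def by auto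
      qed
    qed
  qed
  show "dd (gsp B a x) = dd x" if x: "x \<in> GI Q - {(B, a)}" for x
  proof -
    obtain C c where xc: "x = (C, c)" by (cases x)
    have C: "C \<in> Q" "c \<in> C" "c < Max C" using x xc by (auto simp: GI_iff)
    show ?thesis
    proof (cases "C = B")
      case True
      show ?thesis
      proof (cases "c \<le> a")
        case True
        then have ca: "c < a" using x xc \<open>C = B\<close> by auto
        define m where "m = Min {y \<in> B. c < y}"
        have f1: "finite {y \<in> B. c < y}" using fB by simp
        have ne1: "{y \<in> B. c < y} \<noteq> {}" using ca F(7) by auto
        have m: "m \<in> B" "c < m" using Min_in[OF f1 ne1] unfolding m_def by auto
        have "m \<le> a" unfolding m_def using f1 ca F(7) by (intro Min_le) auto
        have f2: "finite {y \<in> {y \<in> B. y \<le> a}. c < y}" using fB by simp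
        have "Min {y \<in> {y \<in> B. y \<le> a}. c < y} \<le> m"
          using f2 m \<open>m \<le> a\<close> by (intro Min_le) auto
        moreover have "m \<le> Min {y \<in> {y \<in> B. y \<le> a}. c < y}"
          unfolding m_def using f1 ca F(7) by (intro Min_antimono) auto
        ultimately have "Min {y \<in> {y \<in> B. y \<le> a}. c < y} = m" by simp
        then show ?thesis using xc \<open>C = B\<close> True unfolding gsp_def dd_def m_def by simp
      next
        case False
        then have "{y \<in> {y \<in> B. a < y}. c < y} = {y \<in> B. c < y}" by auto
        then show ?thesis using xc \<open>C = B\<close> False unfolding gsp_def dd_def by simp
      qed
    next
      case False
      then show ?thesis using xc unfolding gsp_def by simp
    qed
  qed
  have P': "partition_on Z (spl Q B a)" using spl_part[OF P G] by simp
  have c1: "card (GI (spl Q B a)) + card (spl Q B a) = card Z" using card_GI[OF P'] .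
  have c2: "card (GI Q) + card Q = card Z" using card_GI[OF P] .
  have c3: "card (spl Q B a) = card Q + 1" using spl_part[OF P G] by simp
  show c4: "card (GI (spl Q B a)) + 1 = card (GI Q)" using c1 c2 c3 by simp
  have fG: "finite (GI Q)" using GI_finite[OF P] .
  have "card (gsp B a ` (GI Q - {(B, a)})) = card (GI Q - {(B, a)})"
    using card_image[OF inj] .
  also have "\<dots> = card (GI Q) - 1" using G fG by simp
  finally have "card (gsp B a ` (GI Q - {(B, a)})) = card (GI (spl Q B a))" using c4 by simp
  then show "gsp B a ` (GI Q - {(B, a)}) = GI (spl Q B a)"
    using sub GI_finite[OF P'] by (intro card_subset_eq) auto
qed

lemma sig_le_sum:
  assumes P: "partition_on Z Q" and J: "J \<subseteq> GI Q" "card J = j"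
  shows "sig Q j \<le> sum dd J"
proof -
  have "finite {J. J \<subseteq> GI Q \<and> card J = j}" using GI_finite[OF P] by simp
  then show ?thesis unfolding sig_def using J by (intro Min_le) auto
qed

lemma sig_attain:
  assumes P: "partition_on Z Q" and j: "j \<le> card (GI Q)"
  shows "\<exists>J. J \<subseteq> GI Q \<and> card J = j \<and> sig Q j = sum dd J"
proof -
  have f: "finite {J. J \<subseteq> GI Q \<and> card J = j}" using GI_finite[OF P] by simp
  obtain J0 where "J0 \<subseteq> GI Q" "card J0 = j" using obtain_subset_with_card_n[OF j] by metis
  then have ne: "{J. J \<subseteq> GI Q \<and> card J = j} \<noteq> {}" by auto
  have "sig Q j \<in> sum dd ` {J. J \<subseteq> GI Q \<and> card J = j}"
    unfolding sig_def using f ne by (intro Min_in) auto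
  then show ?thesis by auto
qed

lemma sig_transfer:
  assumes P': "partition_on Z Q'" and sub: "f ` A \<subseteq> GI Q'" and inj: "inj_on f A"
    and le: "\<And>x. x \<in> A \<Longrightarrow> dd (f x) \<le> dd x" and J: "J \<subseteq> A" "card J = j"
  shows "sig Q' j \<le> sum dd J"
proof -
  have "sig Q' j \<le> sum dd (f ` J)"
    using J sub inj card_image[OF inj_on_subset[OF inj J(1)]] by (intro sig_le_sum[OF P']) auto
  also have "\<dots> = sum (dd \<circ> f) J" using sum.reindex[OF inj_on_subset[OF inj J(1)]] by simp
  also have "\<dots> \<le> sum dd J" using le J(1) by (intro sum_mono) auto
  finally show ?thesis .
qed

lemma sig_mrg:
  assumes P: "partition_on Z Q" and B: "B1 \<in> Q" "B2 \<in> Q" "B1 \<noteq> B2" and j: "j \<le> card (GI Q)"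
  shows "sig (mrg Q B1 B2) j \<le> sig Q j"
proof -
  obtain J where J: "J \<subseteq> GI Q" "card J = j" "sig Q j = sum dd J" using sig_attain[OF P j] by blast
  have P': "partition_on Z (mrg Q B1 B2)" using mrg_part[OF P B] by simp
  show ?thesis using sig_transfer[OF P' mrg_GI(1)[OF P B] mrg_GI(2)[OF P B] mrg_GI(3)[OF P B] J(1,2)] J(3)
    by simp
qed

lemma sig_spl:
  assumes P: "partition_on Z Q" and G: "(B, a) \<in> GI Q" and J: "J \<subseteq> GI Q - {(B, a)}" "card J = j"
  shows "sig (spl Q B a) j \<le> sum dd J"
proof -
  have P': "partition_on Z (spl Q B a)" using spl_part[OF P G] by simp
  show ?thesis using sig_transfer[OF P' spl_GI(1)[OF P G] spl_GI(2)[OF P G] _ J] spl_GI(3)[OF P G]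
    by simp
qed

lemma sig_full:
  assumes P: "partition_on Z Q"
  shows "sig Q (card (GI Q)) = SS Q"
proof -
  obtain J where J: "J \<subseteq> GI Q" "card J = card (GI Q)" "sig Q (card (GI Q)) = sum dd J"
    using sig_attain[OF P, of "card (GI Q)"] by auto
  have "J = GI Q" using card_subset_eq[OF GI_finite[OF P] J(1,2)] .
  then show ?thesis using J(3) unfolding SS_def by simp
qed

lemma sig_ge:
  assumes P: "partition_on Z Q" and j: "1 \<le> j" "j \<le> card (GI Q)"
  shows "sig Q j \<ge> min_dist Z" "sig Q j > 0"
proof -
  obtain J where J: "J \<subseteq> GI Q" "card J = j" "sig Q j = sum dd J" using sig_attain[OF P j(2)] by blast
  have fJ: "finite J" using J(1) GI_finite[OF P] finite_subset by blast
  have "J \<noteq> {}" using J(2) j(1) by auto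
  then obtain x where x: "x \<in> J" by blast
  have "dd x \<le> sum dd J" using fJ x J(1) dd_pos[OF P] by (intro member_le_sum) (auto intro: less_imp_le)
  then show "sig Q j \<ge> min_dist Z" "sig Q j > 0"
    using dd_ge[OF P, of x] dd_pos[OF P, of x] x J by auto
qed

lemma sig_nonneg:
  assumes P: "partition_on Z Q" and j: "j \<le> card (GI Q)"
  shows "sig Q j \<ge> 0"
proof -
  obtain J where J: "J \<subseteq> GI Q" "card J = j" "sig Q j = sum dd J" using sig_attain[OF P j] by blast
  have "sum dd J \<ge> 0"
  proof (rule sum_nonneg)
    fix x assume "x \<in> J" then show "dd x \<ge> 0" using J(1) dd_pos[OF P, of x] by auto
  qed
  then show ?thesis using J(3) by simp
qed

lemma sig_spl_shift:
  assumes P: "partition_on Z Q" and G: "(B, a) \<in> GI Q" and j: "j + 1 \<le> card (GI Q)"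
  shows "sig (spl Q B a) j \<le> sig Q (j + 1)"
proof -
  obtain J where J: "J \<subseteq> GI Q" "card J = j + 1" "sig Q (j + 1) = sum dd J" using sig_attain[OF P j] by blast
  have fJ: "finite J" using J(1) GI_finite[OF P] finite_subset by blast
  obtain y where y: "y \<in> J" "(B, a) \<in> J \<Longrightarrow> y = (B, a)"
  proof (cases "(B, a) \<in> J")
    case True then show ?thesis using that by blast
  next
    case False
    have "J \<noteq> {}" using J(2) by auto
    then obtain y where "y \<in> J" by blast
    then show ?thesis using that False by blast
  qed
  have J': "J - {y} \<subseteq> GI Q - {(B, a)}" "card (J - {y}) = j" using J y fJ by auto
  have "sig (spl Q B a) j \<le> sum dd (J - {y})" by (rule sig_spl[OF P G J'])
  also have "\<dots> = sum dd J - dd y" using sum_diff1[of J dd y] fJ y by simp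
  also have "\<dots> \<le> sum dd J" using dd_pos[OF P, of y] y J(1) by auto
  finally show ?thesis using J(3) by simp
qed

lemma sig_spl_max:
  assumes P: "partition_on Z Q" and G: "(B, a) \<in> GI Q" and mx: "\<And>x. x \<in> GI Q \<Longrightarrow> dd x \<le> dd (B, a)"
    and j: "j < card (GI Q)"
  shows "sig (spl Q B a) j \<le> sig Q j"
proof -
  have "j \<le> card (GI Q)" using j by simp
  then obtain J where J: "J \<subseteq> GI Q" "card J = j" "sig Q j = sum dd J" using sig_attain[OF P] by blast
  have fG: "finite (GI Q)" using GI_finite[OF P] .
  have fJ: "finite J" using J(1) fG finite_subset by blast
  show ?thesis
  proof (cases "(B, a) \<in> J")
    case False
    then have "J \<subseteq> GI Q - {(B, a)}" using J(1) by auto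
    then show ?thesis using sig_spl[OF P G _ J(2)] J(3) by simp
  next
    case True
    have "card (GI Q - J) = card (GI Q) - card J" using J(1) fG finite_subset by (intro card_Diff_subset) auto
    then have "card (GI Q - J) > 0" using j J(2) by simp
    then have "GI Q - J \<noteq> {}" by (simp add: card_gt_0_iff)
    then obtain y where y: "y \<in> GI Q" "y \<notin> J" by blast
    define J' where "J' = insert y (J - {(B, a)})"
    have J'1: "J' \<subseteq> GI Q - {(B, a)}" using J(1) y True unfolding J'_def by auto
    have "card (J - {(B, a)}) = j - 1" using fJ True J(2) by simp
    moreover have "card J > 0" using True fJ card_gt_0_iff by blast
    moreover have "j \<ge> 1" using \<open>card J > 0\<close> J(2) by simp
    moreover have "y \<notin> J - {(B, a)}" using y by simp
    ultimately have J'2: "card J' = j" unfolding J'_def using fJ by simp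
    have "sig (spl Q B a) j \<le> sum dd J'" by (rule sig_spl[OF P G J'1 J'2])
    also have "\<dots> = dd y + (sum dd J - dd (B, a))"
      unfolding J'_def using fJ y True by (simp add: sum_diff1)
    also have "\<dots> \<le> sum dd J" using mx[OF y(1)] by simp
    finally show ?thesis using J(3) by simp
  qed
qed

lemma Phi_mrg:
  assumes P: "partition_on Z Q" and B: "B1 \<in> Q" "B2 \<in> Q" "B1 \<noteq> B2" and ne: "GI Q \<noteq> {}"
  shows "Phi (mrg Q B1 B2) \<le> Phi Q * SS Q"
proof -
  define l where "l = card (GI Q)"
  have l1: "l \<ge> 1" using ne GI_finite[OF P] unfolding l_def by (simp add: Suc_leI card_gt_0_iff)
  have P': "partition_on Z (mrg Q B1 B2)" using mrg_part[OF P B] by simp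
  have "card (GI (mrg Q B1 B2)) = l + 1"
    using card_GI[OF P] card_GI[OF P'] mrg_part(2)[OF P B] unfolding l_def by simp
  then have "Phi (mrg Q B1 B2) = prod (sig (mrg Q B1 B2)) {1..<l} * sig (mrg Q B1 B2) l"
    unfolding Phi_def using l1 by (simp add: prod.atLeastLessThan_Suc)
  also have "\<dots> \<le> prod (sig Q) {1..<l} * sig Q l"
  proof (rule mult_mono)
    show "prod (sig (mrg Q B1 B2)) {1..<l} \<le> prod (sig Q) {1..<l}"
      by (intro prod_mono conjI sig_nonneg[OF P'] sig_mrg[OF P B]) (auto simp: l_def \<open>card (GI (mrg Q B1 B2)) = l + 1\<close>)
    show "sig (mrg Q B1 B2) l \<le> sig Q l" using sig_mrg[OF P B] l_def by simp
    show "0 \<le> sig (mrg Q B1 B2) l" using sig_nonneg[OF P'] \<open>card (GI (mrg Q B1 B2)) = l + 1\<close> by simp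
    show "0 \<le> prod (sig Q) {1..<l}" using sig_nonneg[OF P] l_def by (intro prod_nonneg) auto
  qed
  also have "\<dots> = Phi Q * SS Q" unfolding Phi_def l_def using sig_full[OF P] by simp
  finally show ?thesis .
qed

lemma Phi_spl:
  assumes P: "partition_on Z Q" and G: "(B, a) \<in> GI Q" and l2: "card (GI Q) \<ge> 2"
  shows "min_dist Z * Phi (spl Q B a) \<le> Phi Q"
proof -
  define l where "l = card (GI Q)"
  have P': "partition_on Z (spl Q B a)" using spl_part[OF P G] by simp
  have cl: "card (GI (spl Q B a)) = l - 1" using spl_GI(5)[OF P G] unfolding l_def by simp
  have "Phi (spl Q B a) = prod (sig (spl Q B a)) {1..<l - 1}" unfolding Phi_def cl ..
  also have "\<dots> \<le> prod (\<lambda>j. sig Q (j + 1)) {1..<l - 1}"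
    by (intro prod_mono conjI sig_nonneg[OF P'] sig_spl_shift[OF P G]) (auto simp: l_def cl)
  also have "\<dots> = prod (sig Q) {2..<l}"
    using prod.shift_bounds_nat_ivl[of "sig Q" 1 1 "l - 1"] l2 unfolding l_def by (simp add: numeral_2_eq_2)
  finally have 1: "Phi (spl Q B a) \<le> prod (sig Q) {2..<l}" .
  have 2: "Phi Q = sig Q 1 * prod (sig Q) {2..<l}"
    unfolding Phi_def l_def[symmetric] using l2 unfolding l_def
    by (simp add: prod.atLeast_Suc_lessThan numeral_2_eq_2)
  have n1: "Phi (spl Q B a) \<ge> 0" unfolding Phi_def using sig_nonneg[OF P'] by (intro prod_nonneg) auto
  have n2: "prod (sig Q) {2..<l} \<ge> 0" using sig_nonneg[OF P] unfolding l_def by (intro prod_nonneg) auto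
  have "min_dist Z \<le> sig Q 1" using sig_ge(1)[OF P, of 1] l2 by simp
  then have "min_dist Z * Phi (spl Q B a) \<le> sig Q 1 * prod (sig Q) {2..<l}"
    using 1 n1 n2 sig_ge(2)[OF P, of 1] l2 by (intro mult_mono) auto
  then show ?thesis using 2 by simp
qed

lemma Phi_pos:
  assumes P: "partition_on Z Q"
  shows "Phi Q > 0"
  unfolding Phi_def using sig_ge(2)[OF P] by (intro prod_pos) auto

definition splx :: "real set set \<Rightarrow> real set \<times> real \<Rightarrow> real set set" where
  "splx Q x = spl Q (fst x) (snd x)"

definition PS :: "real set set \<Rightarrow> real set set set" where
  "PS Q = {A. A \<subseteq> Q \<and> card A = 2}"

definition gm :: "real set set \<Rightarrow> real set set \<Rightarrow> real set set" where
  "gm Q A = insert (\<Union>A) (Q - A)"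

lemma split_rate_eq: "split_rate \<rho> Q P' = (\<Sum>x\<in>{x \<in> GI Q. splx Q x = P'}. \<rho> * dd x)"
proof -
  have e: "{(B, a). B \<in> Q \<and> a \<in> B \<and> a < Max B \<and> P' = insert {x \<in> B. x \<le> a} (insert {x \<in> B. a < x} (Q - {B}))}
      = {x \<in> GI Q. splx Q x = P'}"
  proof (rule set_eqI)
    fix x :: "real set \<times> real"
    obtain B a where x: "x = (B, a)" by (cases x)
    show "x \<in> {(B, a). B \<in> Q \<and> a \<in> B \<and> a < Max B \<and> P' = insert {x \<in> B. x \<le> a} (insert {x \<in> B. a < x} (Q - {B}))}
      \<longleftrightarrow> x \<in> {x \<in> GI Q. splx Q x = P'}"
      unfolding x GI_def splx_def spl_def by (simp only: mem_Collect_eq case_prod_conv fst_conv snd_conv eq_commute[of P'] conj_assoc)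
  qed
  show ?thesis unfolding split_rate_def e
    by (rule sum.cong) (auto simp: dd_def)
qed

lemma merge_rate_eq: "merge_rate Q P' = real (card {A \<in> PS Q. gm Q A = P'})"
proof -
  have e: "{{B1, B2} | B1 B2. B1 \<in> Q \<and> B2 \<in> Q \<and> B1 \<noteq> B2 \<and> P' = insert (B1 \<union> B2) (Q - {B1, B2})}
      = {A \<in> PS Q. gm Q A = P'}"
  proof (intro equalityI subsetI)
    fix A assume "A \<in> {{B1, B2} | B1 B2. B1 \<in> Q \<and> B2 \<in> Q \<and> B1 \<noteq> B2 \<and> P' = insert (B1 \<union> B2) (Q - {B1, B2})}"
    then obtain B1 B2 where "A = {B1, B2}" "B1 \<in> Q" "B2 \<in> Q" "B1 \<noteq> B2" "P' = insert (B1 \<union> B2) (Q - {B1, B2})"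
      by blast
    then show "A \<in> {A \<in> PS Q. gm Q A = P'}" unfolding PS_def gm_def by auto
  next
    fix A assume "A \<in> {A \<in> PS Q. gm Q A = P'}"
    then have A: "A \<subseteq> Q" "card A = 2" "gm Q A = P'" unfolding PS_def by auto
    then obtain B1 B2 where "A = {B1, B2}" "B1 \<noteq> B2" by (auto simp: card_2_iff)
    then show "A \<in> {{B1, B2} | B1 B2. B1 \<in> Q \<and> B2 \<in> Q \<and> B1 \<noteq> B2 \<and> P' = insert (B1 \<union> B2) (Q - {B1, B2})}"
      using A unfolding gm_def by auto
  qed
  show ?thesis unfolding merge_rate_def e ..
qed

lemma split_rate_nonneg:
  assumes P: "partition_on Z Q" and r: "\<rho> \<ge> 0"
  shows "split_rate \<rho> Q P' \<ge> 0"
  unfolding split_rate_eq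
proof (rule sum_nonneg)
  fix x assume "x \<in> {x \<in> GI Q. splx Q x = P'}"
  then have "dd x > 0" using dd_pos[OF P] by auto
  then show "\<rho> * dd x \<ge> 0" using r by simp
qed

lemma finite_parts: "finite (partitions Z)"
  unfolding partitions_def using finitely_many_partition_on[OF finZ] .

lemma split_sum:
  assumes P: "partition_on Z Q"
  shows "(\<Sum>P'\<in>partitions Z. split_rate \<rho> Q P') = \<rho> * SS Q"
proof -
  have sub: "splx Q ` GI Q \<subseteq> partitions Z"
    using spl_part(1)[OF P] unfolding partitions_def splx_def by auto
  have "(\<Sum>P'\<in>partitions Z. split_rate \<rho> Q P') = (\<Sum>P'\<in>partitions Z. \<Sum>x\<in>{x \<in> GI Q. splx Q x = P'}. \<rho> * dd x)"
    unfolding split_rate_eq ..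
  also have "\<dots> = (\<Sum>x\<in>GI Q. \<rho> * dd x)"
    by (rule sum.group[OF GI_finite[OF P] finite_parts sub])
  also have "\<dots> = \<rho> * SS Q" unfolding SS_def by (simp add: sum_distrib_left)
  finally show ?thesis .
qed

lemma merge_sum:
  assumes P: "partition_on Z Q"
  shows "(\<Sum>P'\<in>partitions Z. merge_rate Q P') = real (card Q choose 2)"
proof -
  have fQ: "finite Q" using part_finite[OF P] .
  have fPS: "finite (PS Q)" unfolding PS_def using fQ by simp
  have sub: "gm Q ` PS Q \<subseteq> partitions Z"
  proof
    fix y assume "y \<in> gm Q ` PS Q"
    then obtain A where A: "A \<subseteq> Q" "card A = 2" "y = gm Q A" unfolding PS_def by auto
    then obtain B1 B2 where "A = {B1, B2}" "B1 \<noteq> B2" by (auto simp: card_2_iff)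
    then have "y = mrg Q B1 B2" "B1 \<in> Q" "B2 \<in> Q" using A unfolding gm_def mrg_def by auto
    then show "y \<in> partitions Z" using mrg_part(1)[OF P] \<open>B1 \<noteq> B2\<close> unfolding partitions_def by auto
  qed
  have "(\<Sum>P'\<in>partitions Z. merge_rate Q P') = real (\<Sum>P'\<in>partitions Z. card {A \<in> PS Q. gm Q A = P'})"
    unfolding merge_rate_eq by simp
  also have "(\<Sum>P'\<in>partitions Z. card {A \<in> PS Q. gm Q A = P'}) = (\<Sum>P'\<in>partitions Z. \<Sum>A\<in>{A \<in> PS Q. gm Q A = P'}. (1::nat))"
    by simp
  also have "\<dots> = (\<Sum>A\<in>PS Q. (1::nat))"
    by (rule sum.group[OF fPS finite_parts sub])
  also have "\<dots> = card Q choose 2" unfolding PS_def using n_subsets[OF fQ, of 2] by simp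
  finally show ?thesis .
qed

lemma total_rate_eq:
  assumes P: "partition_on Z Q"
  shows "total_rate \<rho> Z Q = real (card Q choose 2) + \<rho> * SS Q"
  unfolding total_rate_def arg_rate_def sum.distrib merge_sum[OF P] split_sum[OF P] ..

lemma SS_nonneg: "partition_on Z Q \<Longrightarrow> SS Q \<ge> 0"
  unfolding SS_def using dd_pos by (intro sum_nonneg) (auto intro: less_imp_le)

lemma arg_rate_mrg:
  assumes P: "partition_on Z Q" and B: "B1 \<in> Q" "B2 \<in> Q" "B1 \<noteq> B2"
  shows "arg_rate \<rho> Q (mrg Q B1 B2) = 1"
proof -
  have "{A \<in> PS Q. gm Q A = mrg Q B1 B2} = {{B1, B2}}"
  proof (intro equalityI subsetI)
    fix A assume "A \<in> {A \<in> PS Q. gm Q A = mrg Q B1 B2}"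
    then have A: "A \<subseteq> Q" "card A = 2" "gm Q A = mrg Q B1 B2" unfolding PS_def by auto
    then obtain C1 C2 where C: "A = {C1, C2}" "C1 \<noteq> C2" by (auto simp: card_2_iff)
    then have "mrg Q C1 C2 = mrg Q B1 B2" "C1 \<in> Q" "C2 \<in> Q" using A unfolding gm_def mrg_def by auto
    then have "{C1, C2} = {B1, B2}" using mrg_part(3)[OF P B] mrg_part(3)[OF P \<open>C1 \<in> Q\<close> \<open>C2 \<in> Q\<close> C(2)] by simp
    then show "A \<in> {{B1, B2}}" using C by simp
  next
    fix A assume "A \<in> {{B1, B2}}"
    then show "A \<in> {A \<in> PS Q. gm Q A = mrg Q B1 B2}" using B unfolding PS_def gm_def mrg_def by auto
  qed
  then have m: "merge_rate Q (mrg Q B1 B2) = 1" unfolding merge_rate_eq by simp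
  have E: "{x \<in> GI Q. splx Q x = mrg Q B1 B2} = {}"
  proof (rule ccontr)
    assume "{x \<in> GI Q. splx Q x = mrg Q B1 B2} \<noteq> {}"
    then obtain B a where "(B, a) \<in> GI Q" "spl Q B a = mrg Q B1 B2" unfolding splx_def by auto
    then show False using spl_part(2)[OF P] mrg_part(2)[OF P B] by fastforce
  qed
  have "split_rate \<rho> Q (mrg Q B1 B2) = 0" unfolding split_rate_eq E by simp
  then show ?thesis unfolding arg_rate_def m by simp
qed

lemma jump_mrg:
  assumes P: "partition_on Z Q" and B: "B1 \<in> Q" "B2 \<in> Q" "B1 \<noteq> B2"
  shows "jump_prob \<rho> Z Q (mrg Q B1 B2) = 1 / total_rate \<rho> Z Q"
  unfolding jump_prob_def arg_rate_mrg[OF assms] ..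

lemma jump_le1:
  assumes P: "partition_on Z Q" and P': "P' \<in> partitions Z" and r: "\<rho> \<ge> 0"
  shows "jump_prob \<rho> Z Q P' \<le> 1" "jump_prob \<rho> Z Q P' \<ge> 0"
proof -
  have nn: "arg_rate \<rho> Q X \<ge> 0" for X
    unfolding arg_rate_def using split_rate_nonneg[OF P r] by (simp add: merge_rate_def)
  have "arg_rate \<rho> Q P' \<le> total_rate \<rho> Z Q"
    unfolding total_rate_def using nn P' finite_parts by (intro member_le_sum) auto
  then show "jump_prob \<rho> Z Q P' \<le> 1" "jump_prob \<rho> Z Q P' \<ge> 0"
    unfolding jump_prob_def using nn[of P'] by (auto simp: divide_le_eq_1)
qed

lemma theta_cases:
  assumes "theta Q P' > 0"
  shows "(\<exists>B1 B2. B1 \<in> Q \<and> B2 \<in> Q \<and> B1 \<noteq> B2 \<and> P' = mrg Q B1 B2) \<or> (\<exists>B a. (B, a) \<in> GI Q \<and> P' = spl Q B a)"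
proof (cases "merge_rate Q P' > 0")
  case True
  then have "{A \<in> PS Q. gm Q A = P'} \<noteq> {}" unfolding merge_rate_eq by (metis card.empty of_nat_0 less_irrefl)
  then obtain A where A: "A \<subseteq> Q" "card A = 2" "gm Q A = P'" unfolding PS_def by auto
  then obtain B1 B2 where "A = {B1, B2}" "B1 \<noteq> B2" by (auto simp: card_2_iff)
  then show ?thesis using A unfolding gm_def mrg_def by auto
next
  case False
  then have "split_rate 1 Q P' \<noteq> 0" using assms unfolding theta_def arg_rate_def by (auto simp: merge_rate_def)
  then have "{x \<in> GI Q. splx Q x = P'} \<noteq> {}" unfolding split_rate_eq by (metis sum.empty)
  then show ?thesis unfolding splx_def by auto
qed

lemma theta_mrg:
  assumes P: "partition_on Z Q" and B: "B1 \<in> Q" "B2 \<in> Q" "B1 \<noteq> B2"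
  shows "theta Q (mrg Q B1 B2) > 0"
  unfolding theta_def arg_rate_mrg[OF assms] by simp

lemma chain_exists:
  "partition_on Z Q \<Longrightarrow> card (GI Q) = m \<Longrightarrow> \<exists>R. length R = m + 1 \<and> R ! 0 = pi0 Z \<and> R ! m = Q \<and>
     (\<forall>j\<le>m. partition_on Z (R ! j) \<and> card (R ! j) + j = card Z) \<and>
     (\<forall>j<m. \<exists>B1 B2. B1 \<in> R ! j \<and> B2 \<in> R ! j \<and> B1 \<noteq> B2 \<and> R ! Suc j = mrg (R ! j) B1 B2) \<and>
     (\<forall>j. 1 \<le> j \<and> j \<le> m \<longrightarrow> SS (R ! j) \<le> sig Q j)"
proof (induction m arbitrary: Q)
  case 0
  have "GI Q = {}" using 0 GI_finite[OF 0(1)] by simp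
  then have Q: "Q = pi0 Z" using GI_empty_pi0[OF 0(1)] by simp
  have "card Q = card Z" using card_GI[OF 0(1)] 0(2) by simp
  then show ?case using Q 0(1) by (intro exI[of _ "[Q]"]) auto
next
  case (Suc m)
  note P = Suc.prems(1)
  have fG: "finite (GI Q)" using GI_finite[OF P] .
  have neG: "GI Q \<noteq> {}" using Suc.prems(2) by auto
  have "Max (dd ` GI Q) \<in> dd ` GI Q" using fG neG by (intro Max_in) auto
  then obtain x0 where x0: "x0 \<in> GI Q" "dd x0 = Max (dd ` GI Q)" by auto
  obtain B a where Ba: "x0 = (B, a)" by (cases x0)
  have G: "(B, a) \<in> GI Q" using x0 Ba by simp
  have mx: "dd x \<le> dd (B, a)" if "x \<in> GI Q" for x
    using x0 Ba that fG by (simp add: Max_ge)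
  define Q' where "Q' = spl Q B a"
  have P': "partition_on Z Q'" unfolding Q'_def using spl_part[OF P G] by simp
  have cQ': "card (GI Q') = m" unfolding Q'_def using spl_GI(5)[OF P G] Suc.prems(2) by simp
  obtain R' where R': "length R' = m + 1" "R' ! 0 = pi0 Z" "R' ! m = Q'"
     "\<forall>j\<le>m. partition_on Z (R' ! j) \<and> card (R' ! j) + j = card Z"
     "\<forall>j<m. \<exists>B1 B2. B1 \<in> R' ! j \<and> B2 \<in> R' ! j \<and> B1 \<noteq> B2 \<and> R' ! Suc j = mrg (R' ! j) B1 B2"
     "\<forall>j. 1 \<le> j \<and> j \<le> m \<longrightarrow> SS (R' ! j) \<le> sig Q' j"
    using Suc.IH[OF P' cQ'] by blast
  define R where "R = R' @ [Q]"
  have Rlo: "R ! j = R' ! j" if "j \<le> m" for j unfolding R_def using that R'(1) by (simp add: nth_append)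
  have Rhi: "R ! Suc m = Q" unfolding R_def using R'(1) by (simp add: nth_append)
  have cQ: "card Q + Suc m = card Z" using card_GI[OF P] Suc.prems(2) by simp
  show ?case
  proof (intro exI[of _ R] conjI allI impI)
    show "length R = Suc m + 1" unfolding R_def using R'(1) by simp
    show "R ! 0 = pi0 Z" using Rlo[of 0] R'(2) by simp
    show "R ! Suc m = Q" by (rule Rhi)
    fix j
    {
      assume j: "j \<le> Suc m"
      show "partition_on Z (R ! j)" "card (R ! j) + j = card Z"
      proof -
        have "(partition_on Z (R ! j) \<and> card (R ! j) + j = card Z)"
        proof (cases "j \<le> m")
          case True then show ?thesis using Rlo R'(4) by simp
        next
          case False then have "j = Suc m" using j by simp
          then show ?thesis using Rhi P cQ by simp
        qed
        then show "partition_on Z (R ! j)" "card (R ! j) + j = card Z" by auto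
      qed
    }
    {
      assume j: "j < Suc m"
      show "\<exists>B1 B2. B1 \<in> R ! j \<and> B2 \<in> R ! j \<and> B1 \<noteq> B2 \<and> R ! Suc j = mrg (R ! j) B1 B2"
      proof (cases "j < m")
        case True then show ?thesis using Rlo[of j] Rlo[of "Suc j"] R'(5) by simp
      next
        case False then have jm: "j = m" using j by simp
        have "R ! j = Q'" using Rlo[of j] jm R'(3) by simp
        moreover have "R ! Suc j = mrg Q' {x \<in> B. x \<le> a} {x \<in> B. a < x}"
          using Rhi jm spl_part(3)[OF P G] unfolding Q'_def by simp
        moreover have "{x \<in> B. x \<le> a} \<in> Q'" "{x \<in> B. a < x} \<in> Q'" "{x \<in> B. x \<le> a} \<noteq> {x \<in> B. a < x}"
          unfolding Q'_def using spl_part[OF P G] spl_facts[OF P G] by auto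
        ultimately show ?thesis by blast
      qed
    }
    {
      assume j: "1 \<le> j \<and> j \<le> Suc m"
      show "SS (R ! j) \<le> sig Q j"
      proof (cases "j \<le> m")
        case True
        then have "SS (R ! j) \<le> sig Q' j" using Rlo R'(6) j by simp
        also have "\<dots> \<le> sig Q j" unfolding Q'_def using sig_spl_max[OF P G mx] True Suc.prems(2) by simp
        finally show ?thesis .
      next
        case False then have "j = Suc m" using j by simp
        then show ?thesis using Rhi sig_full[OF P] Suc.prems(2) by simp
      qed
    }
  qed
qed

lemma gamma_bound:
  assumes "c \<le> card Z - 1"
  shows "real (c choose 2) \<le> gamma Z 1"
proof -
  define n where "n = card Z - 1"
  have "c * (c - 1) \<le> n * (n - 1)" using assms unfolding n_def by (intro mult_le_mono) auto
  then have "c choose 2 \<le> n * (n - 1) div 2" unfolding choose_two by (rule div_le_mono)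
  moreover have "2 * (n * (n - 1) div 2) \<le> n * (n - 1)" by simp
  ultimately have "2 * real (c choose 2) \<le> real (n * (n - 1))"
    by (metis (mono_tags, opaque_lifting) le_trans mult_le_mono2 of_nat_le_iff of_nat_mult of_nat_numeral)
  moreover have "gamma Z 1 = real (n * (n - 1)) / 2"
    unfolding gamma_def Let_def n_def by (cases "card Z - 1") (auto simp: mult.commute)
  ultimately show ?thesis by simp
qed

lemma SS_ge:
  assumes P: "partition_on Z Q" and ne: "GI Q \<noteq> {}"
  shows "SS Q \<ge> min_dist Z"
proof -
  have "card (GI Q) \<ge> 1" using ne GI_finite[OF P] by (simp add: Suc_leI card_gt_0_iff)
  then show ?thesis using sig_ge(1)[OF P, of "card (GI Q)"] sig_full[OF P] by simp
qed

lemma T_upper: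
  assumes P: "partition_on Z R" and c: "card R + j = card Z" "1 \<le> j" and r: "\<rho> > 0"
    and a: "min_dist Z > 0"
  shows "total_rate \<rho> Z R \<le> (1 + gamma Z 1 / (\<rho> * min_dist Z)) * \<rho> * SS R" "total_rate \<rho> Z R > 0"
proof -
  have "card (GI R) = j" using card_GI[OF P] c by simp
  then have ne: "GI R \<noteq> {}" using c by auto
  have S: "SS R \<ge> min_dist Z" using SS_ge[OF P ne] .
  have g: "real (card R choose 2) \<le> gamma Z 1" using c by (intro gamma_bound) simp
  have g0: "gamma Z 1 \<ge> 0" unfolding gamma_def Let_def by simp
  have "gamma Z 1 \<le> gamma Z 1 / (\<rho> * min_dist Z) * \<rho> * SS R"
  proof -
    have "gamma Z 1 / (\<rho> * min_dist Z) * \<rho> * SS R = gamma Z 1 * (SS R / min_dist Z)"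
      using r a by (simp add: field_simps)
    moreover have "SS R / min_dist Z \<ge> 1" using S a by simp
    moreover have "gamma Z 1 * 1 \<le> gamma Z 1 * (SS R / min_dist Z)"
      using g0 \<open>SS R / min_dist Z \<ge> 1\<close> by (intro mult_left_mono) auto
    ultimately show ?thesis by simp
  qed
  then show "total_rate \<rho> Z R \<le> (1 + gamma Z 1 / (\<rho> * min_dist Z)) * \<rho> * SS R"
    unfolding total_rate_eq[OF P] using g by (simp add: algebra_simps)
  show "total_rate \<rho> Z R > 0" unfolding total_rate_eq[OF P] using S a r
    by (intro add_nonneg_pos) auto
qed

end

lemma final_arith:
  fixes X Y T0 \<rho> \<alpha> \<Phi> \<beta> :: real and k N :: nat
  assumes T0: "T0 > 0" and r: "\<rho> > 0" and a: "\<alpha> > 0" and F: "\<Phi> > 0" and b: "\<beta> \<ge> 1"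
    and X0: "X \<ge> 0" and X: "X * \<rho> ^ (k + N - 1) * \<alpha> ^ N * \<Phi> \<le> 1 / T0"
    and Y: "Y \<ge> (1 / T0) / (\<beta> ^ (k - 1) * \<rho> ^ (k - 1) * \<Phi>)" and k: "k \<ge> 1" and N: "N \<ge> 1"
  shows "X / Y \<le> (\<beta> ^ k / (\<alpha> * \<rho>)) ^ N"
proof -
  define D where "D = \<beta> ^ (k - 1) * \<rho> ^ (k - 1) * \<Phi>"
  have D: "D > 0" unfolding D_def using b r F by simp
  have "(1 / T0) / D > 0" using D T0 by simp
  then have Y0: "Y > 0" using Y unfolding D_def[symmetric] by linarith
  have "1 / Y \<le> T0 * D"
  proof -
    have "1 / Y \<le> 1 / ((1 / T0) / D)" using Y Y0 D T0 unfolding D_def[symmetric]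
      by (intro divide_left_mono) auto
    then show ?thesis using T0 D by simp
  qed
  then have "X / Y \<le> X * (T0 * D)" using X0 by (simp add: divide_inverse mult_left_mono)
  also have "\<dots> = (X * \<rho> ^ (k + N - 1) * \<alpha> ^ N * \<Phi>) * T0 * \<beta> ^ (k - 1) / (\<rho> ^ N * \<alpha> ^ N)"
  proof -
    have "\<rho> ^ (k + N - 1) = \<rho> ^ (k - 1) * \<rho> ^ N" using k by (simp add: power_add[symmetric])
    then show ?thesis unfolding D_def using r a by (simp add: field_simps)
  qed
  also have "\<dots> \<le> (1 / T0) * T0 * \<beta> ^ (k - 1) / (\<rho> ^ N * \<alpha> ^ N)"
    using X T0 b r a by (intro divide_right_mono mult_right_mono) auto
  also have "\<dots> = \<beta> ^ (k - 1) / (\<alpha> * \<rho>) ^ N" using T0 by (simp add: power_mult_distrib mult.commute)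
  also have "\<dots> \<le> \<beta> ^ (k * N) / (\<alpha> * \<rho>) ^ N"
  proof -
    have "k - 1 \<le> k * N" using N by (metis diff_le_self le_trans mult_le_mono2 nat_mult_1_right)
    then have "\<beta> ^ (k - 1) \<le> \<beta> ^ (k * N)" using b by (rule power_increasing)
    then show ?thesis using a r by (intro divide_right_mono) auto
  qed
  also have "\<dots> = (\<beta> ^ k / (\<alpha> * \<rho>)) ^ N" by (simp add: power_divide power_mult)
  finally show ?thesis .
qed


theorem lemma4:
  fixes Z :: "real set" and n k N :: nat and \<rho> :: real
    and \<pi> :: "real set set" and p :: "real set set list"
  assumes "finite Z" and "card Z = n + 1"
    and "\<rho> > 0"
    and "1 \<le> k" and "k \<le> n"
    and "\<pi> \<in> partitions_order Z k"
    and "N > 0"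
    and "p \<in> paths Z (k + 2 * N) (pi0 Z) \<pi>"
  shows "\<exists>p' \<in> paths Z k (pi0 Z) \<pi>.
           path_prob \<rho> Z p / path_prob \<rho> Z p'
             \<le> ((1 + gamma Z 1 / (\<rho> * min_dist Z)) ^ k / (min_dist Z * \<rho>)) ^ N"
proof -
  interpret fz Z by unfold_locales (rule assms(1))
  note r = assms(3)
  define M where "M = k + 2 * N"
  define \<alpha> where "\<alpha> = min_dist Z"
  define T0 where "T0 = total_rate \<rho> Z (pi0 Z)"
  define \<beta> where "\<beta> = 1 + gamma Z 1 / (\<rho> * \<alpha>)"
  have piP: "partition_on Z \<pi>" and cpi: "card \<pi> + k = card Z"
    using assms(6) assms(2) assms(5) unfolding partitions_order_def partitions_def by auto
  have cGpi: "card (GI \<pi>) = k" using card_GI[OF piP] cpi by simp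
  then have neGpi: "GI \<pi> \<noteq> {}" using assms(4) by auto
  then obtain B0 a0 where Ba0: "(B0, a0) \<in> GI \<pi>" by auto
  have "Min {y \<in> B0. a0 < y} \<in> B0" "a0 < Min {y \<in> B0. a0 < y}" "a0 \<in> B0" "B0 \<subseteq> Z"
    using dd_facts[OF piP Ba0] Ba0 block_props(3)[OF piP] by (auto simp: GI_iff)
  then have a: "\<alpha> > 0" unfolding \<alpha>_def
    by (intro min_dist_pos[of a0 "Min {y \<in> B0. a0 < y}"]) auto
  have p: "length p = M + 1" "p ! 0 = pi0 Z" "p ! M = \<pi>"
    "\<And>i. i \<in> {1..<M} \<Longrightarrow> p ! i \<in> partitions Z - {pi0 Z, \<pi>}"
    "\<And>i. i < M \<Longrightarrow> theta (p ! i) (p ! (i + 1)) > 0"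
    using assms(8) unfolding paths_def M_def by auto
  have pP: "partition_on Z (p ! i)" if "i \<le> M" for i
  proof (cases "i = 0")
    case True then show ?thesis using p(2) pi0_part by simp
  next
    case False
    show ?thesis
    proof (cases "i = M")
      case True then show ?thesis using p(3) piP by simp
    next
      case False
      then show ?thesis using p(4)[of i] \<open>i \<noteq> 0\<close> that unfolding partitions_def by auto
    qed
  qed
  have pne: "p ! i \<noteq> pi0 Z" if "1 \<le> i" "i \<le> M" for i
  proof (cases "i = M")
    case True
    then show ?thesis using p(3) cpi pi0_part(2) assms(4) by auto
  next
    case False then show ?thesis using p(4)[of i] that by auto
  qed
  have pGne: "GI (p ! i) \<noteq> {}" if "1 \<le> i" "i \<le> M" for i
    using GI_empty_pi0[OF pP[OF that(2)]] pne[OF that] by blast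
  have ppart: "p ! i \<in> partitions Z" if "i \<le> M" for i using pP[OF that] unfolding partitions_def by simp
  define X where "X i = (\<Prod>t<i. jump_prob \<rho> Z (p ! t) (p ! Suc t))" for i
  have X0: "X i \<ge> 0" if "i \<le> M" for i
    unfolding X_def using that jump_le1(2)[OF pP ppart] r by (intro prod_nonneg) auto
  have T0pos: "T0 > 0"
  proof -
    have "card (pi0 Z) = n + 1" using pi0_part(2) assms(2) by simp
    then have "real (card (pi0 Z) choose 2) > 0" using assms(4,5) by simp
    then show ?thesis unfolding T0_def total_rate_eq[OF pi0_part(1)] using SS_nonneg[OF pi0_part(1)] r
      by (simp add: add_pos_nonneg)
  qed
  have inv: "\<exists>s. card (p ! i) + i = card Z + 2 * s \<and> X i * \<rho> ^ (i - s - 1) * \<alpha> ^ s * Phi (p ! i) \<le> 1 / T0"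
    if "1 \<le> i" "i \<le> M" for i
    using that
  proof (induction i rule: dec_induct)
    case base
    have M1: "0 < M" using that by simp
    have "(\<exists>B1 B2. B1 \<in> pi0 Z \<and> B2 \<in> pi0 Z \<and> B1 \<noteq> B2 \<and> p ! 1 = mrg (pi0 Z) B1 B2) \<or> (\<exists>B a. (B, a) \<in> GI (pi0 Z) \<and> p ! 1 = spl (pi0 Z) B a)"
      using theta_cases p(5)[OF M1] p(2) by simp
    then obtain B1 B2 where B: "B1 \<in> pi0 Z" "B2 \<in> pi0 Z" "B1 \<noteq> B2" "p ! 1 = mrg (pi0 Z) B1 B2"
      using pi0_part(3) by auto
    have X1: "X 1 = 1 / T0" unfolding X_def T0_def using jump_mrg[OF pi0_part(1) B(1-3)] B(4) p(2) by simp
    have c1: "card (p ! 1) + 1 = card Z" using mrg_part(2)[OF pi0_part(1) B(1-3)] B(4) pi0_part(2) by simp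
    have "card (GI (p ! 1)) = 1" using card_GI[OF pP[of 1]] c1 M1 by simp
    then have "Phi (p ! 1) = 1" unfolding Phi_def by simp
    then show ?case using X1 c1 by (intro exI[of _ 0]) simp
  next
    case (step i)
    obtain s where s: "card (p ! i) + i = card Z + 2 * s" "X i * \<rho> ^ (i - s - 1) * \<alpha> ^ s * Phi (p ! i) \<le> 1 / T0"
      using step.IH step.prems by auto
    have iM: "i < M" using step.prems by simp
    have Pi: "partition_on Z (p ! i)" using pP iM by simp
    have Gi: "GI (p ! i) \<noteq> {}" using pGne step.hyps iM by simp
    have ci: "card (p ! i) < card Z"
    proof -
      have "card (GI (p ! i)) > 0" using Gi GI_finite[OF Pi] by (simp add: card_gt_0_iff)
      then show ?thesis using card_GI[OF Pi] by simp
    qed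
    have s2: "2 * s < i" using s(1) ci by simp
    have Xs: "X (Suc i) = X i * jump_prob \<rho> Z (p ! i) (p ! Suc i)" unfolding X_def by simp
    have Xi0: "X i \<ge> 0" using X0 iM by simp
    have Phi0: "Phi (p ! i) \<ge> 0" using Phi_pos[OF Pi] by simp
    have "(\<exists>B1 B2. B1 \<in> p ! i \<and> B2 \<in> p ! i \<and> B1 \<noteq> B2 \<and> p ! Suc i = mrg (p ! i) B1 B2) \<or> (\<exists>B a. (B, a) \<in> GI (p ! i) \<and> p ! Suc i = spl (p ! i) B a)"
      using theta_cases p(5)[OF iM] by simp
    then show ?case
    proof (elim disjE exE conjE)
      fix B1 B2 assume B: "B1 \<in> p ! i" "B2 \<in> p ! i" "B1 \<noteq> B2" and e: "p ! Suc i = mrg (p ! i) B1 B2"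
      define Ti where "Ti = total_rate \<rho> Z (p ! i)"
      have SSa: "SS (p ! i) \<ge> \<alpha>" using SS_ge[OF Pi Gi] unfolding \<alpha>_def .
      have TiS: "\<rho> * SS (p ! i) \<le> Ti" unfolding Ti_def total_rate_eq[OF Pi] by simp
      have Tipos: "Ti > 0" using TiS SSa a r by (smt (verit) mult_pos_pos)
      have jp: "jump_prob \<rho> Z (p ! i) (p ! Suc i) = 1 / Ti"
        unfolding e Ti_def using jump_mrg[OF Pi B] .
      have Ph: "Phi (p ! Suc i) \<le> Phi (p ! i) * SS (p ! i)" unfolding e using Phi_mrg[OF Pi B Gi] .
      have cS: "card (p ! Suc i) + Suc i = card Z + 2 * s" using mrg_part(2)[OF Pi B] e s(1) by simp
      have ex: "Suc i - s - 1 = Suc (i - s - 1)" using s2 by simp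
      define K where "K = X i * \<rho> ^ (i - s - 1) * \<alpha> ^ s"
      have K0: "K \<ge> 0" unfolding K_def using Xi0 a r by simp
      have "X (Suc i) * \<rho> ^ (Suc i - s - 1) * \<alpha> ^ s * Phi (p ! Suc i) = K * (\<rho> / Ti) * Phi (p ! Suc i)"
        unfolding Xs jp ex K_def by (simp add: field_simps)
      also have "\<dots> \<le> K * (\<rho> / Ti) * (Phi (p ! i) * SS (p ! i))"
        using K0 r Tipos Ph by (intro mult_left_mono) auto
      also have "\<dots> = K * Phi (p ! i) * ((\<rho> * SS (p ! i)) / Ti)" by (simp add: field_simps)
      also have "\<dots> \<le> K * Phi (p ! i) * 1"
        using TiS Tipos K0 Phi0 by (intro mult_left_mono) auto
      also have "\<dots> \<le> 1 / T0" using s(2) unfolding K_def by simp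
      finally show ?case using cS by blast
    next
      fix B a assume G: "(B, a) \<in> GI (p ! i)" and e: "p ! Suc i = spl (p ! i) B a"
      have jp1: "jump_prob \<rho> Z (p ! i) (p ! Suc i) \<le> 1" "jump_prob \<rho> Z (p ! i) (p ! Suc i) \<ge> 0"
        using jump_le1[OF Pi ppart[of "Suc i"]] step.prems r by auto
      have GS: "GI (p ! Suc i) \<noteq> {}" using pGne[of "Suc i"] step.prems step.hyps by simp
      have "card (GI (p ! Suc i)) \<ge> 1" using GS GI_finite[OF pP[of "Suc i"]] step.prems
        by (simp add: Suc_leI card_gt_0_iff)
      then have l2: "card (GI (p ! i)) \<ge> 2" using spl_GI(5)[OF Pi G] e by simp
      have Ph: "\<alpha> * Phi (p ! Suc i) \<le> Phi (p ! i)" unfolding e \<alpha>_def using Phi_spl[OF Pi G l2] .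
      have PhS: "Phi (p ! Suc i) \<ge> 0" using Phi_pos[OF pP[of "Suc i"]] step.prems by simp
      have cS: "card (p ! Suc i) + Suc i = card Z + 2 * Suc s" using spl_part(2)[OF Pi G] e s(1) by simp
      have ex: "Suc i - Suc s - 1 = i - s - 1" by simp
      define K where "K = X i * \<rho> ^ (i - s - 1) * \<alpha> ^ s"
      have K0: "K \<ge> 0" unfolding K_def using Xi0 a r by simp
      have "X (Suc i) * \<rho> ^ (Suc i - Suc s - 1) * \<alpha> ^ Suc s * Phi (p ! Suc i)
          = K * jump_prob \<rho> Z (p ! i) (p ! Suc i) * (\<alpha> * Phi (p ! Suc i))"
        unfolding Xs ex K_def by (simp add: field_simps)
      also have "\<dots> \<le> K * 1 * (\<alpha> * Phi (p ! Suc i))"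
        using K0 jp1 a PhS by (intro mult_right_mono mult_left_mono) auto
      also have "\<dots> \<le> K * Phi (p ! i)" using K0 Ph by (simp add: mult_left_mono)
      also have "\<dots> \<le> 1 / T0" using s(2) unfolding K_def by simp
      finally show ?case using cS by blast
    qed
  qed
  obtain s where s: "card (p ! M) + M = card Z + 2 * s" "X M * \<rho> ^ (M - s - 1) * \<alpha> ^ s * Phi (p ! M) \<le> 1 / T0"
    using inv[of M] assms(4) unfolding M_def by auto
  have sN: "s = N" using s(1) p(3) cpi unfolding M_def by simp
  have XM: "X M * \<rho> ^ (k + N - 1) * \<alpha> ^ N * Phi \<pi> \<le> 1 / T0"
    using s(2) sN p(3) unfolding M_def by (simp add: algebra_simps)
  have pp: "path_prob \<rho> Z p = X M"
  proof -
    have "p \<noteq> []" using p(1) by auto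
    moreover have "hd p = pi0 Z" using p(2) \<open>p \<noteq> []\<close> by (simp add: hd_conv_nth)
    ultimately show ?thesis unfolding path_prob_def X_def using p(1) by simp
  qed
  obtain R where R: "length R = k + 1" "R ! 0 = pi0 Z" "R ! k = \<pi>"
     "\<forall>j\<le>k. partition_on Z (R ! j) \<and> card (R ! j) + j = card Z"
     "\<forall>j<k. \<exists>B1 B2. B1 \<in> R ! j \<and> B2 \<in> R ! j \<and> B1 \<noteq> B2 \<and> R ! Suc j = mrg (R ! j) B1 B2"
     "\<forall>j. 1 \<le> j \<and> j \<le> k \<longrightarrow> SS (R ! j) \<le> sig \<pi> j"
    using chain_exists[OF piP cGpi] by blast
  have Rpath: "R \<in> paths Z k (pi0 Z) \<pi>"
    unfolding paths_def
  proof (intro CollectI conjI ballI allI impI)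
    show "length R = k + 1" "R ! 0 = pi0 Z" "R ! k = \<pi>" using R by auto
    fix i
    {
      assume i: "i \<in> {1..<k}"
      have "partition_on Z (R ! i)" "card (R ! i) + i = card Z" using R(4) i by auto
      moreover have "R ! i \<noteq> pi0 Z" using calculation pi0_part(2) i by auto
      moreover have "R ! i \<noteq> \<pi>" using calculation cpi i by auto
      ultimately show "R ! i \<in> partitions Z - {pi0 Z, \<pi>}" unfolding partitions_def by auto
    }
    {
      assume i: "i < k"
      then obtain B1 B2 where "B1 \<in> R ! i" "B2 \<in> R ! i" "B1 \<noteq> B2" "R ! Suc i = mrg (R ! i) B1 B2"
        using R(5) by blast
      moreover have "partition_on Z (R ! i)" using R(4) i by simp
      ultimately show "theta (R ! i) (R ! (i + 1)) > 0" using theta_mrg by simp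
    }
  qed
  define TR where "TR j = total_rate \<rho> Z (R ! j)" for j
  have jR: "jump_prob \<rho> Z (R ! j) (R ! Suc j) = 1 / TR j" if jk: "j < k" for j
  proof -
    obtain B1 B2 where "B1 \<in> R ! j" "B2 \<in> R ! j" "B1 \<noteq> B2" "R ! Suc j = mrg (R ! j) B1 B2"
      using R(5) jk by blast
    moreover have "partition_on Z (R ! j)" using R(4) jk by simp
    ultimately show ?thesis unfolding TR_def using jump_mrg by simp
  qed
  have TR0: "TR 0 = T0" unfolding TR_def T0_def using R(2) by simp
  have TRb: "TR j \<le> \<beta> * \<rho> * sig \<pi> j" "TR j > 0" if "1 \<le> j" "j < k" for j
  proof -
    have Pj: "partition_on Z (R ! j)" "card (R ! j) + j = card Z" using R(4) that by auto
    have "TR j \<le> \<beta> * \<rho> * SS (R ! j)" unfolding TR_def \<beta>_def \<alpha>_def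
      using T_upper(1)[OF Pj(1) Pj(2) that(1) r] a unfolding \<alpha>_def by simp
    also have "\<dots> \<le> \<beta> * \<rho> * sig \<pi> j"
    proof -
      have "\<beta> \<ge> 0" unfolding \<beta>_def using a r by (simp add: gamma_def Let_def add_nonneg_nonneg)
      then show ?thesis using R(6) that r by (intro mult_left_mono) auto
    qed
    finally show "TR j \<le> \<beta> * \<rho> * sig \<pi> j" .
    show "TR j > 0" unfolding TR_def using T_upper(2)[OF Pj(1) Pj(2) that(1) r] a unfolding \<alpha>_def by simp
  qed
  have b1: "\<beta> \<ge> 1" unfolding \<beta>_def using a r by (simp add: gamma_def Let_def)
  have ppR: "path_prob \<rho> Z R = (\<Prod>j<k. 1 / TR j)"
  proof -
    have "R \<noteq> []" using R(1) by auto
    moreover have "hd R = pi0 Z" using R(2) \<open>R \<noteq> []\<close> by (simp add: hd_conv_nth)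
    ultimately have "path_prob \<rho> Z R = (\<Prod>j<k. jump_prob \<rho> Z (R ! j) (R ! Suc j))"
      unfolding path_prob_def using R(1) by simp
    also have "\<dots> = (\<Prod>j<k. 1 / TR j)" using jR by (intro prod.cong) auto
    finally show ?thesis .
  qed
  have Y: "path_prob \<rho> Z R \<ge> (1 / T0) / (\<beta> ^ (k - 1) * \<rho> ^ (k - 1) * Phi \<pi>)"
  proof -
    have "(\<Prod>j<k. 1 / TR j) = 1 / TR 0 * (\<Prod>j\<in>{1..<k}. 1 / TR j)"
    proof -
      have "{..<k} = insert 0 {1..<k}" using assms(4) by auto
      then show ?thesis by simp
    qed
    also have "(\<Prod>j\<in>{1..<k}. 1 / TR j) \<ge> (\<Prod>j\<in>{1..<k}. 1 / (\<beta> * \<rho> * sig \<pi> j))"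
    proof (rule prod_mono)
      fix j assume j: "j \<in> {1..<k}"
      have "sig \<pi> j > 0" using sig_ge(2)[OF piP, of j] j cGpi by simp
      then have "\<beta> * \<rho> * sig \<pi> j > 0" using b1 r by simp
      then show "0 \<le> 1 / (\<beta> * \<rho> * sig \<pi> j) \<and> 1 / (\<beta> * \<rho> * sig \<pi> j) \<le> 1 / TR j"
        using TRb[of j] j by (auto intro!: divide_left_mono)
    qed
    moreover have "(\<Prod>j\<in>{1..<k}. 1 / (\<beta> * \<rho> * sig \<pi> j)) = 1 / (\<beta> ^ (k - 1) * \<rho> ^ (k - 1) * Phi \<pi>)"
      unfolding Phi_def cGpi by (simp add: prod_dividef prod.distrib power_mult_distrib)
    ultimately have "(\<Prod>j<k. 1 / TR j) \<ge> 1 / T0 * (1 / (\<beta> ^ (k - 1) * \<rho> ^ (k - 1) * Phi \<pi>))"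
      using TR0 T0pos by (metis (no_types, lifting) less_imp_le mult_left_mono zero_le_divide_1_iff)
    then show ?thesis using ppR by simp
  qed
  have "path_prob \<rho> Z p / path_prob \<rho> Z R \<le> (\<beta> ^ k / (\<alpha> * \<rho>)) ^ N"
    unfolding pp
    by (rule final_arith[OF T0pos r a Phi_pos[OF piP] b1 X0[of M] XM Y assms(4)]) (use assms(7) in auto)
  then show ?thesis using Rpath unfolding \<beta>_def \<alpha>_def by blast
qed

end
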